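(* Assume (A7). Consider Algorithm 2 with parameter choice (P2) and with $\rho>0$ small enough that $2\rho^2\|(A^TA)^2\|<1$. Then there is a constant $C_1>0$ (independent of $s$, $k$, $S$, $K$) such that for every stage $s\ge1$ and every inner iteration $k$ of that stage, $$\|x^{k+1}-x^k\|\le\frac{C_1}{\sqrt s}.$$
   Context: Standing setup. Let $n,m,p,q,r,l\ge1$. For $j\in\{1,\dots,m\}$ let $g_j:\mathbb R^q\to\mathbb R^r$ be continuously differentiable with Jacobian $\partial g_j(x)\in\mathbb R^{r\times q}$; for $i\in\{1,\dots,n\}$ let $f_i:\mathbb R^r\to\mathbb R$ be continuously differentiable. Set $g(x)=\frac1m\sum_{j=1}^m g_j(x)$, $F_i(x)=f_i(g(x))$, $F(x)=\frac1n\sum_{i=1}^nF_i(x)$. Let $R:\mathbb R^l\to\mathbb R$ be closed convex, $A\in\mathbb R^{p\times q}$, $B\in\mathbb R^{p\times l}$. $\|\cdot\|$ is the Euclidean norm on vectors and spectral norm on matrices; for positive definite $H$, $\|x\|_H^2=x^THx$. Assumption (A7). The gradients of all $f_i$ and $F_i$, the Jacobians of all $g_j$, and the subgradients of $R$ are uniformly bounded, with $\|\nabla F_i(x)\|\le C_F$ for all $i,x$; $B$ is square and invertible. Algorithm 2 (inputs: integers $S,K\ge1$, $\rho>0$, stepsizes $\eta_s>0$, matrices $G_k$ per stage as below; initial $\tilde x^0=\hat x^0$, $\hat\omega^0$, $\hat\lambda^0$, $\hat G^0=I$). For $s=1,\dots,S$: set $\tilde x=\tilde x^{s-1}$, $x^0=\hat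 x^{s-1}$, $\omega^0=\hat\omega^{s-1}$, $\lambda^0=\hat\lambda^{s-1}$, $G_0=\hat G^{s-1}$; compute $g(\tilde x)$, $\nabla F(\tilde x)$. For $k=0,\dots,K-1$: (a) $\omega^{k+1}\in\arg\min_\omega R(\omega)+\langle\lambda^k,B\omega\rangle+\frac\rho2\|Ax^k+B\omega\|^2$; (b) compute $g(x^k)$ exactly; (c) draw $i_k$ uniform on $\{1,\dots,n\}$ and $j_k$ uniform on $\{1,\dots,m\}$, independently, and set $\nabla\hat F_{i_k}(x^k)=(\partial g_{j_k}(x^k))^T\nabla f_{i_k}(g(x^k))-(\partial g_{j_k}(\tilde x))^T\nabla f_{i_k}(g(\tilde x))+\nabla F(\tilde x)$; (d) $x^{k+1}=\arg\min_x\langle\nabla\hat F_{i_k}(x^k),x-x^k\rangle+\langle\lambda^k,Ax\rangle+\frac\rho2\|Ax+B\omega^{k+1}\|^2+\frac1{2\eta_s}\|x-x^k\|_{G_k}^2$; (e) $\lambda^{k+1}=\lambda^k+\rho(Ax^{k+1}+B\omega^{k+1})$. End of stage $s$: $\tilde x^s=\frac1K\sum_{k=1}^Kx^k$, $\tilde\omega^s=\frac1K\sum_{k=1}^K\omega^k$, $\hat x^s=x^K$, $\hat\omega^s=\omega^K$, $\hat\lambda^s=\lambda^K$, $\hat G^s=G_K$. Parameter choice (P2): $\eta_s=\frac1{s+1}$, and in stage $s$ the matrices $G_0,\dots,G_K$ are scalar multiples of the identity with $\frac1{\sqrt s}I=G_0\succeq G_1\succeq\dots\succeq G_{K-1}=G_K=\frac1{\sqrt{s+1}}I$.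 *)

theory Defs
  imports "HOL-Analysis.Analysis"
begin

definition specnorm :: "real^'n^'m \<Rightarrow> real" where
  "specnorm M = onorm (\<lambda>v. M *v v)"

definition is_subgradient :: "(real^'l \<Rightarrow> real) \<Rightarrow> real^'l \<Rightarrow> real^'l \<Rightarrow> bool" where
  "is_subgradient R w \<xi> \<longleftrightarrow> (\<forall>v. R w + \<xi> \<bullet> (v - w) \<le> R v)"

definition closed_convex_fun :: "(real^'l \<Rightarrow> real) \<Rightarrow> bool" where
  "closed_convex_fun R \<longleftrightarrow> convex_on UNIV R \<and> closed {p. R (fst p) \<le> snd p}"

definition g_avg :: "nat \<Rightarrow> (nat \<Rightarrow> real^'q \<Rightarrow> real^'r) \<Rightarrow> real^'q \<Rightarrow> real^'r" where
  "g_avg m g x = (1 / real m) *\<^sub>R (\<Sum>j<m. g j x)"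

definition Jg_avg :: "nat \<Rightarrow> (nat \<Rightarrow> real^'q \<Rightarrow> real^'q^'r) \<Rightarrow> real^'q \<Rightarrow> real^'q^'r" where
  "Jg_avg m Jg x = (1 / real m) *\<^sub>R (\<Sum>j<m. Jg j x)"

text \<open>Gradient of F_i = f_i o g (chain rule): (dg(x))^T grad f_i(g(x)).\<close>
definition gradFi :: "nat \<Rightarrow> (nat \<Rightarrow> real^'q \<Rightarrow> real^'r) \<Rightarrow> (nat \<Rightarrow> real^'q \<Rightarrow> real^'q^'r)
    \<Rightarrow> (nat \<Rightarrow> real^'r \<Rightarrow> real^'r) \<Rightarrow> nat \<Rightarrow> real^'q \<Rightarrow> real^'q" where
  "gradFi m g Jg gf i x = transpose (Jg_avg m Jg x) *v gf i (g_avg m g x)"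

definition gradF :: "nat \<Rightarrow> nat \<Rightarrow> (nat \<Rightarrow> real^'q \<Rightarrow> real^'r) \<Rightarrow> (nat \<Rightarrow> real^'q \<Rightarrow> real^'q^'r)
    \<Rightarrow> (nat \<Rightarrow> real^'r \<Rightarrow> real^'r) \<Rightarrow> real^'q \<Rightarrow> real^'q" where
  "gradF n m g Jg gf x = (1 / real n) *\<^sub>R (\<Sum>i<n. gradFi m g Jg gf i x)"

text \<open>Reference point of stage s: tilde x^{s-1}; tilde x^0 = hat x^0 = x(1,0),
  tilde x^s = (1/K) sum_{k=1..K} x(s,k).\<close>
definition xtil :: "(nat \<Rightarrow> nat \<Rightarrow> real^'q) \<Rightarrow> nat \<Rightarrow> nat \<Rightarrow> real^'q" where
  "xtil x K s = (if s = 0 then x 1 0 else (1 / real K) *\<^sub>R (\<Sum>k\<in>{1..K}. x s k))"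

definition eta :: "nat \<Rightarrow> real" where
  "eta s = 1 / (real s + 1)"

definition grad_est :: "nat \<Rightarrow> nat \<Rightarrow> (nat \<Rightarrow> real^'q \<Rightarrow> real^'r) \<Rightarrow> (nat \<Rightarrow> real^'q \<Rightarrow> real^'q^'r)
    \<Rightarrow> (nat \<Rightarrow> real^'r \<Rightarrow> real^'r) \<Rightarrow> real^'q \<Rightarrow> nat \<Rightarrow> nat \<Rightarrow> real^'q \<Rightarrow> real^'q" where
  "grad_est n m g Jg gf xt i j xk =
     transpose (Jg j xk) *v gf i (g_avg m g xk)
   - transpose (Jg j xt) *v gf i (g_avg m g xt)
   + gradF n m g Jg gf xt"

text \<open>A (any) run of Algorithm 2 with parameter choice (P2), for S stages of K inner steps,
  for an arbitrary realization ii, jj of the sampled indices.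
  Iterates of stage s: x s k, w s k (omega), lam s k (lambda), G_k = gam s k * I.\<close>
definition alg2_run ::
  "nat \<Rightarrow> nat \<Rightarrow> (nat \<Rightarrow> real^'q \<Rightarrow> real^'r) \<Rightarrow> (nat \<Rightarrow> real^'q \<Rightarrow> real^'q^'r)
   \<Rightarrow> (nat \<Rightarrow> real^'r \<Rightarrow> real^'r) \<Rightarrow> (real^'l \<Rightarrow> real) \<Rightarrow> real^'q^'l \<Rightarrow> real^'l^'l \<Rightarrow> real
   \<Rightarrow> nat \<Rightarrow> nat \<Rightarrow> (nat \<Rightarrow> nat \<Rightarrow> real^'q) \<Rightarrow> (nat \<Rightarrow> nat \<Rightarrow> real^'l) \<Rightarrow> (nat \<Rightarrow> nat \<Rightarrow> real^'l)
   \<Rightarrow> (nat \<Rightarrow> nat \<Rightarrow> real) \<Rightarrow> (nat \<Rightarrow> nat \<Rightarrow> nat) \<Rightarrow> (nat \<Rightarrow> nat \<Rightarrow> nat) \<Rightarrow> bool" where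
  "alg2_run n m g Jg gf R A B \<rho> S K x w lam gam ii jj \<longleftrightarrow>
     K \<ge> 1 \<and>
     \<comment> \<open>warm start: x^0 = hat x^{s-1} = x^K of previous stage, etc.\<close>
     (\<forall>s\<in>{1..<S}. x (Suc s) 0 = x s K \<and> w (Suc s) 0 = w s K \<and> lam (Suc s) 0 = lam s K) \<and>
     \<comment> \<open>(P2): G matrices\<close>
     (\<forall>s\<in>{1..S}. gam s 0 = 1 / sqrt (real s) \<and> (\<forall>k<K. gam s (Suc k) \<le> gam s k)
        \<and> gam s (K - 1) = 1 / sqrt (real s + 1) \<and> gam s K = 1 / sqrt (real s + 1)) \<and>
     (\<forall>s\<in>{1..S}. \<forall>k<K.
        \<comment> \<open>(a) omega update\<close>
        (\<forall>\<omega>. R (w s (Suc k)) + lam s k \<bullet> (B *v w s (Suc k))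
                + \<rho> / 2 * (norm (A *v x s k + B *v w s (Suc k)))\<^sup>2
              \<le> R \<omega> + lam s k \<bullet> (B *v \<omega>) + \<rho> / 2 * (norm (A *v x s k + B *v \<omega>))\<^sup>2) \<and>
        \<comment> \<open>(c) sampled indices\<close>
        ii s k < n \<and> jj s k < m \<and>
        \<comment> \<open>(d) x update\<close>
        (let v = grad_est n m g Jg gf (xtil x K (s - 1)) (ii s k) (jj s k) (x s k);
             \<phi> = (\<lambda>z. v \<bullet> (z - x s k) + lam s k \<bullet> (A *v z)
                     + \<rho> / 2 * (norm (A *v z + B *v w s (Suc k)))\<^sup>2
                     + 1 / (2 * eta s) * (gam s k * (norm (z - x s k))\<^sup>2))
         in \<forall>z. \<phi> (x s (Suc k)) \<le> \<phi> z) \<and>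
        \<comment> \<open>(e) multiplier update\<close>
        lam s (Suc k) = lam s k + \<rho> *\<^sub>R (A *v x s (Suc k) + B *v w s (Suc k)))"

end

theory Submission
  imports Defs
begin

lemma scal_lim:
  fixes a b :: real
  assumes h: "\<forall>t. 0 < t \<and> t \<le> 1 \<longrightarrow> a \<le> t * b"
  shows "a \<le> 0"
proof (rule ccontr)
  assume "\<not> a \<le> 0"
  hence a: "a > 0" by simp
  have b: "b > 0" using h[rule_format, of 1] a by simp
  define t where "t = min 1 (a / (2 * b))"
  have t: "0 < t" "t \<le> 1" using a b by (auto simp: t_def)
  have "a \<le> t * b" using h t by blast
  also have "t * b \<le> a / (2 * b) * b" unfolding t_def by (rule mult_right_mono) (use b in auto)
  also have "a / (2 * b) * b = a / 2" using b by simp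
  finally show False using a by simp
qed

lemma norm_plus_sq:
  fixes p q :: "'a::real_inner"
  shows "(norm (p + t *\<^sub>R q))\<^sup>2 = (norm p)\<^sup>2 + 2 * t * (p \<bullet> q) + t\<^sup>2 * (norm q)\<^sup>2"
  unfolding power2_norm_eq_inner
  by (simp add: inner_add_left inner_add_right inner_commute power2_eq_square algebra_simps)

lemma tr_inner:
  fixes A :: "real^'q^'l"
  shows "mu \<bullet> (A *v d) = (transpose A *v mu) \<bullet> d"
  by (simp add: dot_lmul_matrix)

lemma stepx:
  fixes A :: "real^'q^'l" and B :: "real^'l^'l"
  assumes min: "\<forall>z. v \<bullet> (x1 - x0) + lam \<bullet> (A *v x1) + \<rho> / 2 * (norm (A *v x1 + B *v w1))\<^sup>2 + a * (norm (x1 - x0))\<^sup>2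
      \<le> v \<bullet> (z - x0) + lam \<bullet> (A *v z) + \<rho> / 2 * (norm (A *v z + B *v w1))\<^sup>2 + a * (norm (z - x0))\<^sup>2"
    and rho: "\<rho> \<ge> 0"
  shows "2 * a * (norm (x1 - x0))\<^sup>2 \<le> - ((v + transpose A *v (lam + \<rho> *\<^sub>R (A *v x0 + B *v w1))) \<bullet> (x1 - x0))"
proof -
  define d where "d = x1 - x0"
  define P where "P = A *v x1 + B *v w1"
  define q where "q = A *v d"
  define E where "E = v \<bullet> d + lam \<bullet> q + \<rho> * (P \<bullet> q) + 2 * a * (norm d)\<^sup>2"
  define Q where "Q = \<rho> / 2 * (norm q)\<^sup>2 + a * (norm d)\<^sup>2"
  have "\<forall>t. 0 < t \<and> t \<le> 1 \<longrightarrow> E \<le> t * Q"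
  proof (intro allI impI)
    fix t :: real assume t: "0 < t \<and> t \<le> 1"
    define z where "z = x1 + (- t) *\<^sub>R d"
    have zx: "z - x0 = (1 - t) *\<^sub>R d" by (simp add: z_def d_def algebra_simps)
    have Az: "A *v z = A *v x1 + (- t) *\<^sub>R q"
      by (simp add: z_def q_def matrix_vector_mult_diff_distrib matrix_vector_mult_scaleR)
    have Azw: "A *v z + B *v w1 = P + (- t) *\<^sub>R q" by (simp add: Az P_def algebra_simps)
    have i: "v \<bullet> d + lam \<bullet> (A *v x1) + \<rho> / 2 * (norm P)\<^sup>2 + a * (norm d)\<^sup>2
      \<le> (1 - t) * (v \<bullet> d) + lam \<bullet> (A *v x1) - t * (lam \<bullet> q)
         + \<rho> / 2 * ((norm P)\<^sup>2 + 2 * (- t) * (P \<bullet> q) + (- t)\<^sup>2 * (norm q)\<^sup>2) + a * ((1 - t)\<^sup>2 * (norm d)\<^sup>2)"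
      using min[rule_format, of z] unfolding zx Azw norm_plus_sq
      by (simp add: d_def P_def Az inner_add_right inner_diff_right power_mult_distrib)
    have eq: "((1 - t) * (v \<bullet> d) + lam \<bullet> (A *v x1) - t * (lam \<bullet> q)
         + \<rho> / 2 * ((norm P)\<^sup>2 + 2 * (- t) * (P \<bullet> q) + (- t)\<^sup>2 * (norm q)\<^sup>2) + a * ((1 - t)\<^sup>2 * (norm d)\<^sup>2))
       - (v \<bullet> d + lam \<bullet> (A *v x1) + \<rho> / 2 * (norm P)\<^sup>2 + a * (norm d)\<^sup>2)
       = t * (t * Q) - t * E"
      unfolding E_def Q_def power2_eq_square by (simp add: algebra_simps)
    have "t * E \<le> t * (t * Q)" using i eq by linarith
    thus "E \<le> t * Q" using t by simp
  qed
  hence E: "E \<le> 0" by (rule scal_lim)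
  define mu where "mu = lam + \<rho> *\<^sub>R (A *v x0 + B *v w1)"
  have Pq: "P = (A *v x0 + B *v w1) + q"
    by (simp add: P_def q_def d_def matrix_vector_mult_diff_distrib)
  have "lam \<bullet> q + \<rho> * (P \<bullet> q) = mu \<bullet> q + \<rho> * (norm q)\<^sup>2"
    by (simp add: Pq mu_def inner_add_left power2_norm_eq_inner algebra_simps)
  moreover have "\<rho> * (norm q)\<^sup>2 \<ge> 0" using rho by simp
  ultimately have "2 * a * (norm d)\<^sup>2 \<le> - (v \<bullet> d + mu \<bullet> q)" using E unfolding E_def by linarith
  moreover have "(v + transpose A *v mu) \<bullet> d = v \<bullet> d + mu \<bullet> q"
    unfolding q_def tr_inner by (rule inner_add_left)
  ultimately show ?thesis unfolding d_def mu_def by linarith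
qed

lemma stepw:
  fixes A :: "real^'q^'l" and B :: "real^'l^'l"
  assumes min: "\<forall>\<omega>. R w1 + lam \<bullet> (B *v w1) + \<rho> / 2 * (norm (A *v x0 + B *v w1))\<^sup>2
        \<le> R \<omega> + lam \<bullet> (B *v \<omega>) + \<rho> / 2 * (norm (A *v x0 + B *v \<omega>))\<^sup>2"
    and cvx: "convex_on UNIV R"
  shows "is_subgradient R w1 (- (transpose B *v (lam + \<rho> *\<^sub>R (A *v x0 + B *v w1))))"
  unfolding is_subgradient_def
proof
  fix u' :: "real^'l"
  define u where "u = u' - w1"
  define P where "P = A *v x0 + B *v w1"
  define q where "q = B *v u"
  define mu where "mu = lam + \<rho> *\<^sub>R P"
  define E where "E = R w1 - R u' - lam \<bullet> q - \<rho> * (P \<bullet> q)"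
  define Q where "Q = \<rho> / 2 * (norm q)\<^sup>2"
  have "\<forall>t. 0 < t \<and> t \<le> 1 \<longrightarrow> E \<le> t * Q"
  proof (intro allI impI)
    fix t :: real assume t: "0 < t \<and> t \<le> 1"
    define z where "z = w1 + t *\<^sub>R u"
    have zc: "z = (1 - t) *\<^sub>R w1 + t *\<^sub>R u'" by (simp add: z_def u_def algebra_simps)
    have Rz: "R z \<le> (1 - t) * R w1 + t * R u'"
      using cvx t unfolding convex_on_def zc by auto
    have Bz: "B *v z = B *v w1 + t *\<^sub>R q"
      by (simp add: z_def q_def matrix_vector_right_distrib matrix_vector_mult_scaleR)
    have ABz: "A *v x0 + B *v z = P + t *\<^sub>R q" by (simp add: Bz P_def algebra_simps)
    have i: "R w1 + lam \<bullet> (B *v w1) + \<rho> / 2 * (norm P)\<^sup>2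
      \<le> R z + lam \<bullet> (B *v w1) + t * (lam \<bullet> q) + \<rho> / 2 * ((norm P)\<^sup>2 + 2 * t * (P \<bullet> q) + t\<^sup>2 * (norm q)\<^sup>2)"
      using min[rule_format, of z] unfolding ABz norm_plus_sq
      by (simp add: P_def Bz inner_add_right)
    have eq: "((1 - t) * R w1 + t * R u' + lam \<bullet> (B *v w1) + t * (lam \<bullet> q) + \<rho> / 2 * ((norm P)\<^sup>2 + 2 * t * (P \<bullet> q) + t\<^sup>2 * (norm q)\<^sup>2))
       - (R w1 + lam \<bullet> (B *v w1) + \<rho> / 2 * (norm P)\<^sup>2) = t * (t * Q) - t * E"
      unfolding E_def Q_def power2_eq_square by (simp add: algebra_simps)
    have "t * E \<le> t * (t * Q)" using i eq Rz by linarith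
    thus "E \<le> t * Q" using t by simp
  qed
  hence E: "E \<le> 0" by (rule scal_lim)
  have "(- (transpose B *v mu)) \<bullet> (u' - w1) = - (mu \<bullet> q)"
    unfolding q_def u_def tr_inner by simp
  moreover have "mu \<bullet> q = lam \<bullet> q + \<rho> * (P \<bullet> q)" by (simp add: mu_def inner_add_left)
  ultimately show "R w1 + - (transpose B *v (lam + \<rho> *\<^sub>R (A *v x0 + B *v w1))) \<bullet> (u' - w1) \<le> R u'"
    using E unfolding E_def mu_def P_def by linarith
qed

lemma stepx2:
  fixes A :: "real^'q^'l" and B :: "real^'l^'l"
  assumes min: "\<forall>z. v \<bullet> (x1 - x0) + lam \<bullet> (A *v x1) + \<rho> / 2 * (norm (A *v x1 + B *v w1))\<^sup>2 + e * (gg * (norm (x1 - x0))\<^sup>2)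
      \<le> v \<bullet> (z - x0) + lam \<bullet> (A *v z) + \<rho> / 2 * (norm (A *v z + B *v w1))\<^sup>2 + e * (gg * (norm (z - x0))\<^sup>2)"
    and rho: "\<rho> \<ge> 0"
  shows "2 * (e * gg) * (norm (x1 - x0))\<^sup>2 \<le> - ((v + transpose A *v (lam + \<rho> *\<^sub>R (A *v x0 + B *v w1))) \<bullet> (x1 - x0))"
  by (rule stepx[OF _ rho]) (use min in \<open>simp only: mult.assoc simp_thms\<close>)

lemma spec_bound: "norm ((M::real^'a^'b) *v z) \<le> specnorm M * norm z"
  unfolding specnorm_def by (rule onorm) simp

lemma spec_nonneg: "specnorm (M::real^'a^'b) \<ge> 0"
  unfolding specnorm_def by (rule onorm_pos_le) simp

lemma transp_bound:
  fixes M :: "real^'a^'b"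
  assumes b: "\<forall>z. norm (M *v z) \<le> L * norm z" and L: "L \<ge> 0"
  shows "norm (transpose M *v y) \<le> L * norm y"
proof -
  define u where "u = transpose M *v y"
  have "norm u * norm u = u \<bullet> u" by (simp add: power2_norm_eq_inner power2_eq_square[symmetric])
  also have "u \<bullet> u = y \<bullet> (M *v u)" unfolding tr_inner u_def ..
  also have "\<dots> \<le> norm y * norm (M *v u)" by (rule norm_cauchy_schwarz)
  also have "\<dots> \<le> norm y * (L * norm u)" using b by (simp add: mult_left_mono)
  finally have h: "norm u * norm u \<le> (L * norm y) * norm u" by (simp add: mult_ac)
  show ?thesis
  proof (cases "norm u = 0")
    case True thus ?thesis using L u_def by simp
  next
    case False
    hence "norm u > 0" by simp
    with h show ?thesis unfolding u_def by (simp add: mult_le_cancel_right)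
  qed
qed

lemma antimono_upto:
  fixes f :: "nat \<Rightarrow> real"
  assumes m: "\<forall>k<K. f (Suc k) \<le> f k" and "i \<le> j" "j \<le> K"
  shows "f j \<le> f i"
  using assms(2,3)
proof (induction j)
  case 0 thus ?case by simp
next
  case (Suc j)
  show ?case
  proof (cases "i = Suc j")
    case True thus ?thesis by simp
  next
    case False
    hence "i \<le> j" "j \<le> K" using Suc.prems by auto
    hence "f j \<le> f i" by (rule Suc.IH)
    moreover have "f (Suc j) \<le> f j" using m Suc.prems by auto
    ultimately show ?thesis by linarith
  qed
qed

theorem lemma10:
  fixes n m :: nat
    and g :: "nat \<Rightarrow> real^'q \<Rightarrow> real^'r"
    and Jg :: "nat \<Rightarrow> real^'q \<Rightarrow> real^'q^'r"
    and f :: "nat \<Rightarrow> real^'r \<Rightarrow> real"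
    and gf :: "nat \<Rightarrow> real^'r \<Rightarrow> real^'r"
    and R :: "real^'l \<Rightarrow> real"
    and A :: "real^'q^'l"
    and B :: "real^'l^'l"
    and \<rho> CF :: real
  assumes n_pos: "n \<ge> 1" and m_pos: "m \<ge> 1"
    and g_diff: "\<forall>j<m. \<forall>x. (g j has_derivative (\<lambda>h. Jg j x *v h)) (at x)"
    and Jg_cont: "\<forall>j<m. continuous_on UNIV (Jg j)"
    and f_diff: "\<forall>i<n. \<forall>y. (f i has_derivative (\<lambda>h. gf i y \<bullet> h)) (at y)"
    and gf_cont: "\<forall>i<n. continuous_on UNIV (gf i)"
    and R_cc: "closed_convex_fun R"
    and bnd_f: "\<exists>L. \<forall>i<n. \<forall>y. norm (gf i y) \<le> L"
    and bnd_Jg: "\<exists>L. \<forall>j<m. \<forall>x. specnorm (Jg j x) \<le> L"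
    and bnd_R: "\<exists>L. \<forall>w \<xi>. is_subgradient R w \<xi> \<longrightarrow> norm \<xi> \<le> L"
    and bnd_F: "\<forall>i<n. \<forall>x. norm (gradFi m g Jg gf i x) \<le> CF"
    and B_inv: "invertible B"
    and rho_pos: "\<rho> > 0"
    and rho_small: "2 * \<rho>\<^sup>2 * specnorm ((transpose A ** A) ** (transpose A ** A)) < 1"
  shows "\<exists>C1>0. \<forall>S K x w lam gam ii jj.
           alg2_run n m g Jg gf R A B \<rho> S K x w lam gam ii jj \<longrightarrow>
           (\<forall>s\<in>{1..S}. \<forall>k<K. norm (x s (Suc k) - x s k) \<le> C1 / sqrt (real s))"
proof -
  obtain Lf where Lf: "\<forall>i<n. \<forall>y. norm (gf i y) \<le> Lf" using bnd_f by blast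
  obtain LJ where LJ: "\<forall>j<m. \<forall>x. specnorm (Jg j x) \<le> LJ" using bnd_Jg by blast
  obtain LR where LR: "\<forall>w \<xi>. is_subgradient R w \<xi> \<longrightarrow> norm \<xi> \<le> LR" using bnd_R by blast
  have "norm (gf 0 0) \<le> Lf" using Lf n_pos by simp
  hence Lf0: "0 \<le> Lf" using norm_ge_zero order_trans by blast
  have "specnorm (Jg 0 0) \<le> LJ" using LJ m_pos by simp
  hence LJ0: "0 \<le> LJ" using spec_nonneg order_trans by blast
  have "norm (gradFi m g Jg gf 0 0) \<le> CF" using bnd_F n_pos by simp
  hence CF0: "0 \<le> CF" using norm_ge_zero order_trans by blast
  have Jt: "norm (transpose (Jg j x) *v y) \<le> LJ * norm y" if "j < m" for j x y
  proof (rule transp_bound[OF _ LJ0], rule allI)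
    fix z
    have "norm (Jg j x *v z) \<le> specnorm (Jg j x) * norm z" by (rule spec_bound)
    also have "\<dots> \<le> LJ * norm z" using LJ that by (simp add: mult_right_mono)
    finally show "norm (Jg j x *v z) \<le> LJ * norm z" .
  qed
  have gF: "norm (gradF n m g Jg gf xx) \<le> CF" for xx
  proof -
    have "norm (\<Sum>i<n. gradFi m g Jg gf i xx) \<le> (\<Sum>i<n. norm (gradFi m g Jg gf i xx))"
      by (rule norm_sum)
    also have "\<dots> \<le> (\<Sum>i<n. CF)" by (rule sum_mono) (use bnd_F in auto)
    also have "\<dots> = real n * CF" by simp
    finally have h: "norm (\<Sum>i<n. gradFi m g Jg gf i xx) \<le> real n * CF" .
    have "norm (gradF n m g Jg gf xx) = (1 / real n) * norm (\<Sum>i<n. gradFi m g Jg gf i xx)"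
      unfolding gradF_def by simp
    also have "\<dots> \<le> (1 / real n) * (real n * CF)" using h by (intro mult_left_mono) auto
    also have "\<dots> = CF" using n_pos by simp
    finally show ?thesis .
  qed
  have vb: "norm (grad_est n m g Jg gf xt i j xk) \<le> 2 * LJ * Lf + CF" if "i < n" "j < m" for xt i j xk
  proof -
    have a: "norm (transpose (Jg j xk) *v gf i (g_avg m g xk)) \<le> LJ * Lf"
      using Jt[OF that(2)] Lf that(1) LJ0 by (meson mult_left_mono order_trans)
    have b: "norm (transpose (Jg j xt) *v gf i (g_avg m g xt)) \<le> LJ * Lf"
      using Jt[OF that(2)] Lf that(1) LJ0 by (meson mult_left_mono order_trans)
    have "norm (grad_est n m g Jg gf xt i j xk) \<le> norm (transpose (Jg j xk) *v gf i (g_avg m g xk))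
        + norm (transpose (Jg j xt) *v gf i (g_avg m g xt)) + norm (gradF n m g Jg gf xt)"
      unfolding grad_est_def by (meson norm_triangle_ineq norm_triangle_ineq4 add_right_mono order_trans)
    thus ?thesis using a b gF[of xt] by linarith
  qed
  obtain Bi where Bi: "Bi ** transpose B = mat 1"
    using transpose_invertible[OF B_inv] unfolding invertible_def by blast
  define KM where "KM = specnorm (transpose A ** Bi)"
  have KM0: "KM \<ge> 0" unfolding KM_def by (rule spec_nonneg)
  have ATmu: "norm (transpose A *v mu) \<le> KM * norm (transpose B *v mu)" for mu
  proof -
    have "transpose A *v mu = (transpose A ** Bi) *v (transpose B *v mu)"
      by (metis matrix_vector_mul_assoc matrix_mul_assoc Bi matrix_mul_rid)
    thus ?thesis unfolding KM_def using spec_bound by metis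
  qed
  define W where "W = 2 * LJ * Lf + CF + KM * \<bar>LR\<bar>"
  have W0: "W \<ge> 0" unfolding W_def using LJ0 Lf0 CF0 KM0 by simp
  show ?thesis
  proof (intro exI[of _ "W + 1"] conjI allI impI ballI)
    show "W + 1 > 0" using W0 by simp
  next
    fix S K x w lam gam ii jj s k
    assume run: "alg2_run n m g Jg gf R A B \<rho> S K x w lam gam ii jj"
      and s: "s \<in> {1..S}" and k: "k < K"
    have K1: "K \<ge> 1" using run unfolding alg2_run_def by blast
    have gam: "gam s 0 = 1 / sqrt (real s)" "\<forall>k<K. gam s (Suc k) \<le> gam s k"
        "gam s (K - 1) = 1 / sqrt (real s + 1)"
      using run s unfolding alg2_run_def by blast+
    have st: "(\<forall>\<omega>. R (w s (Suc k)) + lam s k \<bullet> (B *v w s (Suc k))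
                + \<rho> / 2 * (norm (A *v x s k + B *v w s (Suc k)))\<^sup>2
              \<le> R \<omega> + lam s k \<bullet> (B *v \<omega>) + \<rho> / 2 * (norm (A *v x s k + B *v \<omega>))\<^sup>2) \<and>
        ii s k < n \<and> jj s k < m \<and>
        (let v = grad_est n m g Jg gf (xtil x K (s - 1)) (ii s k) (jj s k) (x s k);
             \<phi> = (\<lambda>z. v \<bullet> (z - x s k) + lam s k \<bullet> (A *v z)
                     + \<rho> / 2 * (norm (A *v z + B *v w s (Suc k)))\<^sup>2
                     + 1 / (2 * eta s) * (gam s k * (norm (z - x s k))\<^sup>2))
         in \<forall>z. \<phi> (x s (Suc k)) \<le> \<phi> z)"
      using run s k unfolding alg2_run_def by blast
    define v where "v = grad_est n m g Jg gf (xtil x K (s - 1)) (ii s k) (jj s k) (x s k)"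
    define mu where "mu = lam s k + \<rho> *\<^sub>R (A *v x s k + B *v w s (Suc k))"
    define d where "d = x s (Suc k) - x s k"
    have xm: "\<forall>z. v \<bullet> (x s (Suc k) - x s k) + lam s k \<bullet> (A *v x s (Suc k))
          + \<rho> / 2 * (norm (A *v x s (Suc k) + B *v w s (Suc k)))\<^sup>2
          + 1 / (2 * eta s) * (gam s k * (norm (x s (Suc k) - x s k))\<^sup>2)
        \<le> v \<bullet> (z - x s k) + lam s k \<bullet> (A *v z)
          + \<rho> / 2 * (norm (A *v z + B *v w s (Suc k)))\<^sup>2
          + 1 / (2 * eta s) * (gam s k * (norm (z - x s k))\<^sup>2)"
      using st unfolding Let_def v_def by blast
    have main: "2 * (1 / (2 * eta s) * gam s k) * (norm d)\<^sup>2 \<le> - ((v + transpose A *v mu) \<bullet> d)"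
      unfolding d_def mu_def by (rule stepx2[OF xm]) (use rho_pos in simp)
    have cvx: "convex_on UNIV R" using R_cc unfolding closed_convex_fun_def by blast
    have "is_subgradient R (w s (Suc k)) (- (transpose B *v mu))"
      unfolding mu_def by (rule stepw[OF _ cvx]) (use st in blast)
    hence "norm (- (transpose B *v mu)) \<le> LR" using LR by blast
    hence "norm (transpose B *v mu) \<le> \<bar>LR\<bar>" by simp
    hence "KM * norm (transpose B *v mu) \<le> KM * \<bar>LR\<bar>" using KM0 by (simp add: mult_left_mono)
    hence am: "norm (transpose A *v mu) \<le> KM * \<bar>LR\<bar>" using ATmu[of mu] by linarith
    have "norm v \<le> 2 * LJ * Lf + CF" unfolding v_def using vb st by blast
    hence nw: "norm (v + transpose A *v mu) \<le> W" unfolding W_def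
      using am norm_triangle_ineq[of v "transpose A *v mu"] by linarith
    have "- ((v + transpose A *v mu) \<bullet> d) = (- (v + transpose A *v mu)) \<bullet> d" by (rule inner_minus_left[symmetric])
    also have "\<dots> \<le> norm (- (v + transpose A *v mu)) * norm d" by (rule norm_cauchy_schwarz)
    also have "\<dots> \<le> W * norm d" unfolding norm_minus_cancel using nw by (rule mult_right_mono) simp
    finally have mainW: "2 * (1 / (2 * eta s) * gam s k) * (norm d)\<^sup>2 \<le> W * norm d"
      using main by linarith
    have s1: "real s \<ge> 1" using s by simp
    have "gam s (K - 1) \<le> gam s k" by (rule antimono_upto[OF gam(2)]) (use k in auto)
    hence gk: "gam s k \<ge> 1 / sqrt (real s + 1)" using gam(3) by simp
    have c: "2 * (1 / (2 * eta s) * gam s k) = (real s + 1) * gam s k"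
      unfolding eta_def by simp
    have "(real s + 1) * gam s k \<ge> (real s + 1) * (1 / sqrt (real s + 1))"
      using gk s1 by (intro mult_left_mono) auto
    also have "(real s + 1) * (1 / sqrt (real s + 1)) = sqrt (real s + 1)"
      using real_div_sqrt[of "real s + 1"] s1 by simp
    finally have cs: "(real s + 1) * gam s k \<ge> sqrt (real s)" by (smt (verit) real_sqrt_le_mono)
    have sq: "sqrt (real s) > 0" using s1 by simp
    have "sqrt (real s) * norm d \<le> W"
    proof (cases "norm d = 0")
      case True thus ?thesis using W0 by simp
    next
      case False
      hence nd: "norm d > 0" by simp
      have "sqrt (real s) * norm d * norm d \<le> (real s + 1) * gam s k * norm d * norm d"
        using cs nd by (simp add: mult_right_mono)
      also have "\<dots> = 2 * (1 / (2 * eta s) * gam s k) * (norm d)\<^sup>2"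
        by (simp only: c power2_eq_square mult.assoc)
      also have "\<dots> \<le> W * norm d" by (rule mainW)
      finally show ?thesis using nd by (simp add: mult_le_cancel_right)
    qed
    hence "norm d \<le> W / sqrt (real s)" using sq by (simp add: pos_le_divide_eq mult.commute)
    also have "\<dots> \<le> (W + 1) / sqrt (real s)" using sq by (simp add: divide_right_mono)
    finally show "norm (x s (Suc k) - x s k) \<le> (W + 1) / sqrt (real s)" unfolding d_def .
  qed
qed

end
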